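(* Let $\mathcal M=(\{1,\dots,n\}\uplus\{\mathbf{good}\},\mathcal D,\mathbf Q)$ be a CTMDP with absorbing state $\mathbf{good}$, $B>0$, and let $\pi$ be a policy such that, writing $\mathbf d_t:=\pi_{B-t}$ and letting $W^\pi_t$ solve $\frac{d}{dt}W^\pi_t=\mathbf Q^{\mathbf d_t}W^\pi_t$ with $W^\pi_0=\mathbf u(\mathbf{good})$, the decision vector $\mathbf d_t$ maximizes $\mathbf Q^{\mathbf d}W^\pi_t$ (elementwise, over $\mathbf d\in\mathcal D$) for almost all $t\in[0,B]$. Take $t^*$ such that $\mathcal F_{n+2}(W^\pi_{t^*})$ differs from $\lim_{t\uparrow t^*}\mathcal F_{n+2}(W^\pi_t)$, and suppose $\mathcal F_{n+2}(W^\pi_{t^*})=\{\mathbf d^1,\dots,\mathbf d^p\}$ with $p>1$. For $i\in\{1,\dots,p\}$ let $$\Delta_i:=\sup\{\delta>0: \mathbf d^i\in\mathcal F_{n+2}(W^\pi_t)\text{ for all }t\in[t^*,t^*+\delta)\}.$$ Then $\Delta_1=\Delta_2=\dots=\Delta_p$. Moreover, suppose $t^*\le\delta_1<\delta_2<t^*+\Delta_1$ and $\pi_{B-t}=\mathbf d$ for all $t\in[\delta_1,\delta_2)$, for some $\mathbf d\in\mathcal F_{n+1}(W^\pi_{t^*})$. If $\pi'$ is a policy with $\pi'_{B-t}=\pi_{B-t}$ for $t\in[0,\delta_1)$ and $\pi'_{B-t}=\mathbf d'$ for all $t\in[\delta_1,\delta_2)$, for some $\mathbf d'\in\mathcal F_{n+1}(W^\pi_{t^*})\setminus\{\mathbf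 d\}$, then $\pi'$ also has the property that $\pi'_{B-t}$ maximizes $\mathbf Q^{\mathbf d}W^{\pi'}_t$ for almost all $t\in[0,\delta_2)$ (where $W^{\pi'}$ is defined from $\pi'$ in the same way as $W^\pi$ from $\pi$).
   Context: CTMDP: $\mathcal M=(S,\mathcal D,\mathbf Q)$ with finite state set $S$, decision vectors $\mathcal D=\prod_{s\in S}\mathcal D_s$ (finite action sets), and for each $\mathbf d\in\mathcal D$ a generator matrix $\mathbf Q^{\mathbf d}$ (off-diagonal entries $\mathbf Q^{\mathbf d}(s,s')\ge0$ depending only on $\mathbf d(s)$; diagonal entries make row sums zero). A state is absorbing if its row is zero for every $\mathbf d$. A policy is a measurable map $\pi:[0,B]\to\mathcal D$. $\mathbf u(s)$ is the vector with $1$ in coordinate $s$ and $0$ elsewhere. Vector comparisons and maximizations are elementwise. For a vector $W$ define recursively $\mathcal F_1(W)=\{\mathbf d\in\mathcal D:\mathbf d\text{ maximizes }\mathbf Q^{\mathbf d}W\}$ and, for $j\ge2$, $\mathcal F_j(W)=\{\mathbf d\in\mathcal F_{j-1}(W):\mathbf d\text{ maximizes }[\mathbf Q^{\mathbf d}]^jW\text{ over }\mathcal F_{j-1}(W)\}$. *)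

theory Defs
  imports "HOL-Analysis.Analysis"
begin

text \<open>CTMDP with finite state type 's and actions of type 'a.
  Q s a s' is the transition rate from s to s' under action a chosen in s;
  so the generator of a decision vector d has entries Q s (d s) s'.\<close>

definition ctmdp :: "('s::finite \<Rightarrow> 'a set) \<Rightarrow> ('s \<Rightarrow> 'a \<Rightarrow> 's \<Rightarrow> real) \<Rightarrow> bool" where
  "ctmdp Act Q \<longleftrightarrow>
     (\<forall>s. finite (Act s) \<and> Act s \<noteq> {}) \<and>
     (\<forall>s a s'. a \<in> Act s \<longrightarrow> s \<noteq> s' \<longrightarrow> 0 \<le> Q s a s') \<and>
     (\<forall>s a. a \<in> Act s \<longrightarrow> Q s a s = - (\<Sum>s'\<in>UNIV - {s}. Q s a s'))"

definition decisions :: "('s \<Rightarrow> 'a set) \<Rightarrow> ('s \<Rightarrow> 'a) set" where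
  "decisions Act = {d. \<forall>s. d s \<in> Act s}"

definition absorbing :: "('s \<Rightarrow> 'a set) \<Rightarrow> ('s \<Rightarrow> 'a \<Rightarrow> 's \<Rightarrow> real) \<Rightarrow> 's \<Rightarrow> bool" where
  "absorbing Act Q g \<longleftrightarrow> (\<forall>a\<in>Act g. \<forall>s'. Q g a s' = 0)"

definition Qmul :: "('s::finite \<Rightarrow> 'a \<Rightarrow> 's \<Rightarrow> real) \<Rightarrow> ('s \<Rightarrow> 'a) \<Rightarrow> ('s \<Rightarrow> real) \<Rightarrow> ('s \<Rightarrow> real)" where
  "Qmul Q d W = (\<lambda>s. \<Sum>s'\<in>UNIV. Q s (d s) s' * W s')"

text \<open>F_j(W); index 0 is an auxiliary base case (all decision vectors), so that
  Fset Act Q 1 W is the set of maximisers of Q^d W over D, and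
  Fset Act Q (Suc j) W the maximisers of (Q^d)^(Suc j) W over Fset Act Q j W.\<close>
fun Fset :: "('s::finite \<Rightarrow> 'a set) \<Rightarrow> ('s \<Rightarrow> 'a \<Rightarrow> 's \<Rightarrow> real) \<Rightarrow> nat \<Rightarrow> ('s \<Rightarrow> real) \<Rightarrow> ('s \<Rightarrow> 'a) set" where
  "Fset Act Q 0 W = decisions Act"
| "Fset Act Q (Suc j) W =
     {d \<in> Fset Act Q j W. \<forall>d'\<in>Fset Act Q j W. \<forall>s.
        (Qmul Q d' ^^ Suc j) W s \<le> (Qmul Q d ^^ Suc j) W s}"

text \<open>A policy: measurable map [0,B] -> D (D finite, discrete sigma-algebra).\<close>
definition policy :: "('s \<Rightarrow> 'a set) \<Rightarrow> real \<Rightarrow> (real \<Rightarrow> 's \<Rightarrow> 'a) \<Rightarrow> bool" where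
  "policy Act B \<pi> \<longleftrightarrow> (\<forall>t\<in>{0..B}. \<pi> t \<in> decisions Act) \<and>
     (\<forall>d. {t\<in>{0..B}. \<pi> t = d} \<in> sets borel)"

text \<open>W solves d/dt W_t = Q^{pi_{B-t}} W_t, W_0 = u(good) on [0,B]
  (Caratheodory sense, i.e. the integral equation, componentwise).\<close>
definition value_fn :: "('s::finite \<Rightarrow> 'a \<Rightarrow> 's \<Rightarrow> real) \<Rightarrow> 's \<Rightarrow> real \<Rightarrow> (real \<Rightarrow> 's \<Rightarrow> 'a)
     \<Rightarrow> (real \<Rightarrow> 's \<Rightarrow> real) \<Rightarrow> bool" where
  "value_fn Q g B \<pi> W \<longleftrightarrow>
     (\<forall>t\<in>{0..B}. \<forall>s. ((\<lambda>\<tau>. Qmul Q (\<pi> (B - \<tau>)) (W \<tau>) s) has_integral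
                         (W t s - (if s = g then 1 else 0))) {0..t})"

definition Delta :: "('s::finite \<Rightarrow> 'a set) \<Rightarrow> ('s \<Rightarrow> 'a \<Rightarrow> 's \<Rightarrow> real) \<Rightarrow> nat \<Rightarrow> real
     \<Rightarrow> (real \<Rightarrow> 's \<Rightarrow> real) \<Rightarrow> real \<Rightarrow> ('s \<Rightarrow> 'a) \<Rightarrow> ereal" where
  "Delta Act Q k B W tstar d =
     Sup (ereal ` {\<delta>. \<delta> > 0 \<and> (\<forall>t. tstar \<le> t \<and> t < tstar + \<delta> \<and> t \<le> B \<longrightarrow> d \<in> Fset Act Q k (W t))})"

end

theory Submission
  imports Defs
begin


lemma Fset_Suc_sub: "Fset Act Q (Suc k) W \<subseteq> Fset Act Q k W" by auto

lemma Fset_mono: "j \<le> k \<Longrightarrow> Fset Act Q k W \<subseteq> Fset Act Q j W"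
  by (induction k) (auto simp: le_Suc_eq)

lemma Fset_dec: "d \<in> Fset Act Q k W \<Longrightarrow> d \<in> decisions Act"
  using Fset_mono[of 0 k] by auto

lemma Fset_pow_eq:
  "d \<in> Fset Act Q k W \<Longrightarrow> d' \<in> Fset Act Q k W \<Longrightarrow> j \<le> k \<Longrightarrow>
   (Qmul Q d ^^ j) W = (Qmul Q d' ^^ j) W"
proof (induction k arbitrary: j)
  case 0 then show ?case by simp
next
  case (Suc k)
  have dk: "d \<in> Fset Act Q k W" "d' \<in> Fset Act Q k W" using Suc.prems by auto
  show ?case
  proof (cases "j \<le> k")
    case True then show ?thesis using Suc.IH dk by blast
  next
    case False
    then have j: "j = Suc k" using Suc.prems by simp
    have "\<forall>s. (Qmul Q d' ^^ Suc k) W s \<le> (Qmul Q d ^^ Suc k) W s"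
      using Suc.prems(1) dk by auto
    moreover have "\<forall>s. (Qmul Q d ^^ Suc k) W s \<le> (Qmul Q d' ^^ Suc k) W s"
      using Suc.prems(2) dk by auto
    ultimately show ?thesis unfolding j by (intro ext) (meson order_antisym)
  qed
qed

lemma Fset_same:
  assumes "d1 \<in> decisions Act" "d2 \<in> decisions Act"
    and "\<And>j. (Qmul Q d1 ^^ j) W = (Qmul Q d2 ^^ j) W"
  shows "d1 \<in> Fset Act Q k W \<longleftrightarrow> d2 \<in> Fset Act Q k W"
proof (induction k)
  case 0 then show ?case using assms by simp
next
  case (Suc k)
  have e: "(Qmul Q d1 ^^ Suc k) W = (Qmul Q d2 ^^ Suc k) W" by (rule assms(3))
  show ?case unfolding Fset.simps mem_Collect_eq e using Suc by blast
qed

lemma F1_eq: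
  assumes "d \<in> Fset Act Q 1 W" "d' \<in> Fset Act Q 1 W"
  shows "Qmul Q d W = Qmul Q d' W"
  using Fset_pow_eq[OF assms, of 1] by simp



lemma krylov_exists:
  fixes f :: "'v::euclidean_space \<Rightarrow> 'v"
  shows "\<exists>k \<le> DIM('v). (f^^k) x \<in> span ((\<lambda>i. (f^^i) x) ` {..<k})"
proof (rule ccontr)
  assume H: "\<not> ?thesis"
  have "k \<le> Suc DIM('v) \<Longrightarrow> dim ((\<lambda>i. (f^^i) x) ` {..<k}) = k" for k
  proof (induction k)
    case 0 then show ?case by simp
  next
    case (Suc k)
    have "(f^^k) x \<notin> span ((\<lambda>i. (f^^i) x) ` {..<k})" using H Suc.prems by auto
    then show ?case using Suc by (simp add: lessThan_Suc dim_insert)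
  qed
  from this[of "Suc DIM('v)"] have "dim ((\<lambda>i. (f^^i) x) ` {..<Suc DIM('v)}) = Suc DIM('v)" by simp
  moreover have "dim ((\<lambda>i. (f^^i) x) ` {..<Suc DIM('v)}) \<le> DIM('v)" by (rule dim_subset_UNIV)
  ultimately show False by simp
qed

lemma krylov_closed:
  fixes f :: "'v::real_vector \<Rightarrow> 'v"
  assumes lin: "linear f" and top: "(f^^k) x \<in> span ((\<lambda>i. (f^^i) x) ` {..<k})"
  shows "(f^^j) x \<in> span ((\<lambda>i. (f^^i) x) ` {..<k})"
proof -
  let ?S = "(\<lambda>i. (f^^i) x) ` {..<k}"
  have fS: "f y \<in> span ?S" if "y \<in> span ?S" for y
    using that
  proof (induction rule: span_induct_alt)
    case base then show ?case using linear_0[OF lin] by (simp add: span_zero)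
  next
    case (step c z y)
    then obtain i where i: "i < k" "z = (f^^i) x" by auto
    have "f z \<in> span ?S"
    proof (cases "Suc i < k")
      case True
      have "f z = (f^^(Suc i)) x" using i by simp
      then show ?thesis using True by (auto intro!: span_base simp del: funpow.simps)
    next
      case False then have "Suc i = k" using i by simp
      then have "f z = (f^^k) x" using i by (metis comp_apply funpow.simps(2))
      then show ?thesis using top by simp
    qed
    then show ?case using step linear_add[OF lin] linear_scale[OF lin]
      by (simp add: span_add span_scale)
  qed
  show ?thesis
  proof (induction j)
    case 0 then show ?case
    proof (cases k)
      case 0 then show ?thesis using top by simp
    next
      case (Suc n)
      have "(f^^0) x \<in> (\<lambda>i. (f^^i) x) ` {..<k}" using Suc by blast
      then show ?thesis by (rule span_base)
    qed
  next
    case (Suc j) then show ?case using fS by simp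
  qed
qed

lemma span_coeffs:
  fixes g :: "nat \<Rightarrow> 'v::real_vector"
  assumes "y \<in> span (g ` {..<k})"
  shows "\<exists>c. y = (\<Sum>i<k. c i *\<^sub>R g i)"
  using assms
proof (induction rule: span_induct_alt)
  case base then show ?case by (rule exI[of _ "\<lambda>_. 0"]) simp
next
  case (step c x y)
  then obtain i0 c0 where i0: "i0 < k" "x = g i0" and y: "y = (\<Sum>i<k. c0 i *\<^sub>R g i)" by auto
  have "c *\<^sub>R x + y = (\<Sum>i<k. (c0 i + (if i = i0 then c else 0)) *\<^sub>R g i)"
  proof -
    have "(\<Sum>i<k. (if i = i0 then c else 0) *\<^sub>R g i) = (\<Sum>i<k. (if i = i0 then c *\<^sub>R g i0 else 0))"
      by (rule sum.cong) auto
    also have "\<dots> = c *\<^sub>R x" using i0 by simp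
    finally show ?thesis by (simp add: y scaleR_add_left sum.distrib)
  qed
  then show ?case apply - apply (rule exI) apply assumption done
qed

lemma krylov:
  fixes f :: "'v::euclidean_space \<Rightarrow> 'v"
  assumes "linear f"
  shows "\<exists>k \<le> DIM('v). \<forall>j. \<exists>c. (f^^j) x = (\<Sum>i<k. c i *\<^sub>R (f^^i) x)"
proof -
  obtain k where k: "k \<le> DIM('v)" "(f^^k) x \<in> span ((\<lambda>i. (f^^i) x) ` {..<k})"
    using krylov_exists by blast
  show ?thesis using k krylov_closed[OF assms k(2)] span_coeffs by blast
qed



definition Qmat :: "('s::finite \<Rightarrow> 'a \<Rightarrow> 's \<Rightarrow> real) \<Rightarrow> ('s \<Rightarrow> 'a) \<Rightarrow> real^'s^'s" where
  "Qmat Q d = (\<chi> s s'. Q s (d s) s')"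

lemma Qmul_vec: "vec_lambda (Qmul Q d v) = Qmat Q d *v vec_lambda v"
  by (simp add: vec_eq_iff matrix_vector_mult_def Qmul_def Qmat_def)

lemma Qmul_pow_vec: "vec_lambda ((Qmul Q d ^^ j) v) = (((*v) (Qmat Q d)) ^^ j) (vec_lambda v)"
proof (induction j)
  case 0 then show ?case by simp
next
  case (Suc j)
  have "vec_lambda ((Qmul Q d ^^ Suc j) v) = Qmat Q d *v vec_lambda ((Qmul Q d ^^ j) v)"
    by (simp add: Qmul_vec)
  also have "\<dots> = (((*v) (Qmat Q d)) ^^ Suc j) (vec_lambda v)" using Suc by simp
  finally show ?case .
qed

lemma Qmul_lincomb:
  fixes Q :: "'s::finite \<Rightarrow> 'a \<Rightarrow> 's \<Rightarrow> real"
  shows "Qmul Q d (\<lambda>s. \<Sum>i\<in>I. c i * V i s) s = (\<Sum>i\<in>I. c i * Qmul Q d (V i) s)"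
  unfolding Qmul_def by (simp add: sum_distrib_left sum.swap[of _ I] mult.left_commute)

lemma Qmul_diff:
  fixes Q :: "'s::finite \<Rightarrow> 'a \<Rightarrow> 's \<Rightarrow> real"
  shows "Qmul Q d (\<lambda>s. V s - U s) s = Qmul Q d V s - Qmul Q d U s"
  unfolding Qmul_def by (simp add: algebra_simps sum_subtractf)

lemma Qmul_pow_diff:
  fixes Q :: "'s::finite \<Rightarrow> 'a \<Rightarrow> 's \<Rightarrow> real"
  shows "(Qmul Q d ^^ j) (\<lambda>s. V s - U s) = (\<lambda>s. (Qmul Q d ^^ j) V s - (Qmul Q d ^^ j) U s)"
  by (induction j) (simp_all add: Qmul_diff[abs_def])

lemma krylov_Qmul:
  fixes Q :: "'s::finite \<Rightarrow> 'a \<Rightarrow> 's \<Rightarrow> real"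
  shows "\<exists>k \<le> CARD('s). \<forall>j. \<exists>c. \<forall>s. (Qmul Q d ^^ j) W s = (\<Sum>i<k. c i * (Qmul Q d ^^ i) W s)"
proof -
  obtain k where k: "k \<le> DIM(real^'s)"
    "\<forall>j. \<exists>c. (((*v) (Qmat Q d)) ^^ j) (vec_lambda W) = (\<Sum>i<k. c i *\<^sub>R (((*v) (Qmat Q d)) ^^ i) (vec_lambda W))"
    using krylov[of "(*v) (Qmat Q d)" "vec_lambda W"] by auto
  have "\<forall>j. \<exists>c. \<forall>s. (Qmul Q d ^^ j) W s = (\<Sum>i<k. c i * (Qmul Q d ^^ i) W s)"
  proof
    fix j
    obtain c where c: "(((*v) (Qmat Q d)) ^^ j) (vec_lambda W) = (\<Sum>i<k. c i *\<^sub>R (((*v) (Qmat Q d)) ^^ i) (vec_lambda W))"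
      using k(2) by blast
    show "\<exists>c. \<forall>s. (Qmul Q d ^^ j) W s = (\<Sum>i<k. c i * (Qmul Q d ^^ i) W s)"
    proof (intro exI allI)
      fix s
      have "vec_lambda ((Qmul Q d ^^ j) W) $ s = (\<Sum>i<k. c i *\<^sub>R vec_lambda ((Qmul Q d ^^ i) W)) $ s"
        using c by (simp only: Qmul_pow_vec)
      then show "(Qmul Q d ^^ j) W s = (\<Sum>i<k. c i * (Qmul Q d ^^ i) W s)" by simp
    qed
  qed
  then show ?thesis using k(1) by auto
qed

lemma miller:
  fixes Q :: "'s::finite \<Rightarrow> 'a \<Rightarrow> 's \<Rightarrow> real"
  assumes "d1 \<in> Fset Act Q CARD('s) W" "d2 \<in> Fset Act Q CARD('s) W"
  shows "(Qmul Q d2 ^^ j) W = (Qmul Q d1 ^^ j) W"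
proof -
  obtain k where k: "k \<le> CARD('s)" and kc: "\<forall>j. \<exists>c. \<forall>s. (Qmul Q d1 ^^ j) W s = (\<Sum>i<k. c i * (Qmul Q d1 ^^ i) W s)"
    using krylov_Qmul by blast
  have g0: "Qmul Q d2 ((Qmul Q d1 ^^ i) W) = Qmul Q d1 ((Qmul Q d1 ^^ i) W)" if "i < k" for i
  proof -
    have e1: "(Qmul Q d2 ^^ i) W = (Qmul Q d1 ^^ i) W"
      by (rule Fset_pow_eq[OF assms(2,1)]) (use that k in simp)
    have e2: "(Qmul Q d2 ^^ Suc i) W = (Qmul Q d1 ^^ Suc i) W"
      by (rule Fset_pow_eq[OF assms(2,1)]) (use that k in simp)
    have "Qmul Q d2 ((Qmul Q d1 ^^ i) W) = (Qmul Q d2 ^^ Suc i) W" by (simp add: e1[symmetric])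
    also have "\<dots> = Qmul Q d1 ((Qmul Q d1 ^^ i) W)" by (simp only: e2) simp
    finally show ?thesis .
  qed
  have g: "Qmul Q d2 ((Qmul Q d1 ^^ j) W) = Qmul Q d1 ((Qmul Q d1 ^^ j) W)" for j
  proof -
    obtain c where c: "\<forall>s. (Qmul Q d1 ^^ j) W s = (\<Sum>i<k. c i * (Qmul Q d1 ^^ i) W s)" using kc by blast
    have e: "(Qmul Q d1 ^^ j) W = (\<lambda>s. \<Sum>i<k. c i * (Qmul Q d1 ^^ i) W s)" using c by auto
    show ?thesis unfolding e by (rule ext) (simp add: Qmul_lincomb g0)
  qed
  show ?thesis
    by (induction j) (simp_all add: g)
qed



lemma linear_mmul: "linear (\<lambda>M::real^'n^'n. A ** M)"
proof (rule linearI)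
  fix x y :: "real^'n^'n" show "A ** (x + y) = A ** x + A ** y" by (rule matrix_add_ldistrib)
next
  fix c :: real and x :: "real^'n^'n"
  show "A ** (c *\<^sub>R x) = c *\<^sub>R (A ** x)"
    by (simp add: vec_eq_iff matrix_matrix_mult_def sum_distrib_left mult.left_commute)
qed

lemma mpow_mult: "((\<lambda>M. A ** M) ^^ j) (mat 1) *v y = (((*v) A) ^^ j) (y::real^'n)"
  for A :: "real^'n^'n"
proof (induction j)
  case 0 then show ?case using matrix_vector_mul_lid[of y] by simp
next
  case (Suc j)
  then show ?case by (simp add: matrix_vector_mul_assoc[symmetric])
qed

lemma sum_mv_component:
  fixes M :: "nat \<Rightarrow> real^'n^'n"
  shows "((\<Sum>i<k. c i *\<^sub>R M i) *v y) $ s = (\<Sum>i<k. c i * (M i *v y) $ s)"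
  by (simp add: matrix_vector_mult_def sum_distrib_left sum_distrib_right sum.swap[of _ "{..<k}"] mult.assoc)

lemma krylov_uniform:
  fixes Q :: "'s::finite \<Rightarrow> 'a \<Rightarrow> 's \<Rightarrow> real"
  shows "\<exists>k. \<forall>j. \<exists>c. \<forall>v s. (Qmul Q d ^^ j) v s = (\<Sum>i<k. c i * (Qmul Q d ^^ i) v s)"
proof -
  let ?f = "\<lambda>M::real^'s^'s. Qmat Q d ** M"
  obtain k where k: "\<forall>j. \<exists>c. (?f ^^ j) (mat 1) = (\<Sum>i<k. c i *\<^sub>R (?f ^^ i) (mat 1))"
    using krylov[OF linear_mmul, of "Qmat Q d" "mat 1"] by blast
  have "\<forall>j. \<exists>c. \<forall>v s. (Qmul Q d ^^ j) v s = (\<Sum>i<k. c i * (Qmul Q d ^^ i) v s)"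
  proof
    fix j
    obtain c where c: "(?f ^^ j) (mat 1) = (\<Sum>i<k. c i *\<^sub>R (?f ^^ i) (mat 1))" using k by blast
    have "(Qmul Q d ^^ j) v s = (\<Sum>i<k. c i * (Qmul Q d ^^ i) v s)" for v s
    proof -
      have "(Qmul Q d ^^ j) v s = vec_lambda ((Qmul Q d ^^ j) v) $ s" by simp
      also have "\<dots> = ((?f ^^ j) (mat 1) *v vec_lambda v) $ s" by (simp only: Qmul_pow_vec mpow_mult)
      also have "\<dots> = (\<Sum>i<k. c i * ((?f ^^ i) (mat 1) *v vec_lambda v) $ s)" by (simp only: c sum_mv_component)
      also have "\<dots> = (\<Sum>i<k. c i * (Qmul Q d ^^ i) v s)" by (simp only: mpow_mult Qmul_pow_vec[symmetric]) simp
      finally show ?thesis .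
    qed
    then show "\<exists>c. \<forall>v s. (Qmul Q d ^^ j) v s = (\<Sum>i<k. c i * (Qmul Q d ^^ i) v s)" by blast
  qed
  then show ?thesis by blast
qed



lemma gronwall0:
  fixes u :: "real \<Rightarrow> real"
  assumes ab: "a \<le> b" and cont: "continuous_on {a..b} u" and nn: "\<forall>t\<in>{a..b}. 0 \<le> u t"
    and C: "0 \<le> C" and le: "\<forall>t\<in>{a..b}. u t \<le> C * integral {a..t} u"
  shows "\<forall>t\<in>{a..b}. u t = 0"
proof
  fix t assume t: "t \<in> {a..b}"
  define F where "F x = integral {a..x} u" for x
  define v where "v x = exp (- C * x) * F x" for x
  have Fcont: "continuous_on {a..b} F"
    unfolding F_def by (rule indefinite_integral_continuous_1[OF integrable_continuous_interval[OF cont]])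
  have Fder: "(F has_real_derivative u x) (at x)" if "a < x" "x < b" for x
  proof -
    have "(F has_real_derivative u x) (at x within {a..b})"
      unfolding F_def using integral_has_real_derivative[OF cont] that by auto
    moreover have "at x within {a..b} = at x"
      using that by (intro at_within_interior) auto
    ultimately show ?thesis by simp
  qed
  have Fnn: "0 \<le> F x" if "x \<in> {a..b}" for x
  proof -
    have "u integrable_on {a..x}"
      using that by (intro integrable_continuous_interval continuous_on_subset[OF cont]) auto
    moreover have "\<And>y. y \<in> {a..x} \<Longrightarrow> 0 \<le> u y" using that nn by auto
    ultimately show ?thesis unfolding F_def by (rule Henstock_Kurzweil_Integration.integral_nonneg)
  qed
  have "v a \<ge> v t"
  proof (rule DERIV_nonpos_imp_decreasing_open[of a t v])
    show "a \<le> t" using t by simp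
    show "continuous_on {a..t} v"
      unfolding v_def using t
      by (intro continuous_intros continuous_on_subset[OF Fcont]) auto
    fix x assume x: "a < x" "x < t"
    have "(v has_real_derivative (exp (- C * x) * u x + (- C * exp (- C * x)) * F x)) (at x)"
      unfolding v_def using Fder[of x] x t
      by (auto intro!: derivative_eq_intros)
    moreover have "exp (- C * x) * u x + (- C * exp (- C * x)) * F x \<le> 0"
    proof -
      have "u x \<le> C * F x" using le x t unfolding F_def by auto
      then have "exp (- C * x) * u x \<le> exp (- C * x) * (C * F x)" by simp
      then show ?thesis by (simp add: algebra_simps)
    qed
    ultimately show "\<exists>y. (v has_real_derivative y) (at x) \<and> y \<le> 0" by blast
  qed
  moreover have "v a = 0" unfolding v_def F_def by simp
  ultimately have "exp (- C * t) * F t \<le> 0" unfolding v_def by simp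
  then have "F t \<le> 0" by (simp add: mult_le_0_iff)
  then have "u t \<le> 0" using le t C unfolding F_def by (smt (verit) mult_nonneg_nonpos)
  then show "u t = 0" using nn t by force
qed

lemma gronwall_family:
  fixes \<phi> \<psi> :: "'i \<Rightarrow> real \<Rightarrow> real"
  assumes fin: "finite I" and ab: "a \<le> b" and C: "0 \<le> C"
    and cont: "\<forall>i\<in>I. continuous_on {a..b} (\<phi> i)"
    and int: "\<forall>i\<in>I. \<forall>t\<in>{a..b}. (\<psi> i has_integral \<phi> i t) {a..t}"
    and bnd: "\<forall>i\<in>I. \<forall>\<tau>\<in>{a..b}. \<bar>\<psi> i \<tau>\<bar> \<le> C * (\<Sum>j\<in>I. \<bar>\<phi> j \<tau>\<bar>)"
  shows "\<forall>i\<in>I. \<forall>t\<in>{a..b}. \<phi> i t = 0"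
proof -
  define u where "u \<tau> = (\<Sum>j\<in>I. \<bar>\<phi> j \<tau>\<bar>)" for \<tau>
  have ucont: "continuous_on {a..b} u"
    unfolding u_def using cont by (intro continuous_intros) auto
  have ile: "\<bar>\<phi> i t\<bar> \<le> C * integral {a..t} u" if i: "i \<in> I" and t: "t \<in> {a..b}" for i t
  proof -
    have uint: "(u has_integral integral {a..t} u) {a..t}"
      using integrable_continuous_interval[OF continuous_on_subset[OF ucont]] t by auto
    then have Cu: "((\<lambda>\<tau>. C * u \<tau>) has_integral C * integral {a..t} u) {a..t}"
      by (rule has_integral_mult_right)
    have p: "(\<psi> i has_integral \<phi> i t) {a..t}" using int i t by auto
    have bb: "\<bar>\<psi> i x\<bar> \<le> C * u x" if "x \<in> {a..t}" for x
      using bnd i t that unfolding u_def by auto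
    have "\<phi> i t \<le> C * integral {a..t} u"
      by (rule has_integral_le[OF p Cu]) (use bb in \<open>fastforce simp: abs_le_iff\<close>)
    moreover have "- \<phi> i t \<le> C * integral {a..t} u"
      by (rule has_integral_le[OF has_integral_neg[OF p] Cu]) (use bb in \<open>fastforce simp: abs_le_iff\<close>)
    ultimately show ?thesis by linarith
  qed
  have "\<forall>t\<in>{a..b}. u t = 0"
  proof (rule gronwall0[OF ab ucont])
    show "\<forall>t\<in>{a..b}. 0 \<le> u t" unfolding u_def by (simp add: sum_nonneg)
    show "0 \<le> real (card I) * C" using C by simp
    show "\<forall>t\<in>{a..b}. u t \<le> real (card I) * C * integral {a..t} u"
    proof
      fix t assume t: "t \<in> {a..b}"
      have "u t = (\<Sum>j\<in>I. \<bar>\<phi> j t\<bar>)" by (simp add: u_def)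
      also have "\<dots> \<le> (\<Sum>j\<in>I. C * integral {a..t} u)"
        by (rule sum_mono) (use ile t in auto)
      finally have "u t \<le> (\<Sum>j\<in>I. C * integral {a..t} u)" .
      then show "u t \<le> real (card I) * C * integral {a..t} u" by simp
    qed
  qed
  then show ?thesis unfolding u_def using fin by (simp add: sum_nonneg_eq_0_iff)
qed



lemma cont_int:
  fixes X :: "real \<Rightarrow> real"
  assumes ab: "a \<le> b" and h: "\<forall>t\<in>{a..b}. (f has_integral (X t - c)) {a..t}"
  shows "continuous_on {a..b} X"
proof -
  have fi: "f integrable_on {a..b}" using h ab by auto
  have "continuous_on {a..b} (\<lambda>t. c + integral {a..t} f)"
    by (intro continuous_intros indefinite_integral_continuous_1[OF fi])
  moreover have "\<forall>t\<in>{a..b}. c + integral {a..t} f = X t"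
  proof
    fix t assume "t \<in> {a..b}"
    then have "integral {a..t} f = X t - c" using h integral_unique by blast
    then show "c + integral {a..t} f = X t" by simp
  qed
  ultimately show ?thesis using continuous_on_cong[of "{a..b}" "{a..b}" "\<lambda>t. c + integral {a..t} f" X] by auto
qed

lemma cont_Qmul:
  fixes Q :: "'s::finite \<Rightarrow> 'a \<Rightarrow> 's \<Rightarrow> real"
  assumes "\<forall>s. continuous_on S (\<lambda>t. V t s)"
  shows "continuous_on S (\<lambda>t. Qmul Q d (V t) s)"
  unfolding Qmul_def using assms by (intro continuous_intros) auto

lemma cont_Qmul_pow:
  fixes Q :: "'s::finite \<Rightarrow> 'a \<Rightarrow> 's \<Rightarrow> real"
  assumes "\<forall>s. continuous_on S (\<lambda>t. V t s)"
  shows "continuous_on S (\<lambda>t. (Qmul Q d ^^ j) (V t) s)"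
proof (induction j arbitrary: s)
  case 0 then show ?case using assms by simp
next
  case (Suc j)
  then show ?case using cont_Qmul[of S "\<lambda>t. (Qmul Q d ^^ j) (V t)" Q d s] by simp
qed

lemma int_Qmul:
  fixes Q :: "'s::finite \<Rightarrow> 'a \<Rightarrow> 's \<Rightarrow> real"
  assumes "\<forall>s. ((\<lambda>\<tau>. V \<tau> s) has_integral X s) S"
  shows "((\<lambda>\<tau>. Qmul Q d (V \<tau>) s) has_integral Qmul Q d X s) S"
  unfolding Qmul_def using assms by (intro has_integral_sum has_integral_mult_right) auto

lemma int_Qmul_pow:
  fixes Q :: "'s::finite \<Rightarrow> 'a \<Rightarrow> 's \<Rightarrow> real"
  assumes "\<forall>s. ((\<lambda>\<tau>. V \<tau> s) has_integral X s) S"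
  shows "((\<lambda>\<tau>. (Qmul Q d ^^ j) (V \<tau>) s) has_integral (Qmul Q d ^^ j) X s) S"
proof (induction j arbitrary: s)
  case 0 then show ?case using assms by simp
next
  case (Suc j)
  then show ?case using int_Qmul[of "\<lambda>\<tau>. (Qmul Q d ^^ j) (V \<tau>)" "(Qmul Q d ^^ j) X" S Q d s] by simp
qed

definition Lc :: "('s::finite \<Rightarrow> 'a set) \<Rightarrow> ('s \<Rightarrow> 'a \<Rightarrow> 's \<Rightarrow> real) \<Rightarrow> real" where
  "Lc Act Q = (\<Sum>s\<in>UNIV. \<Sum>s'\<in>UNIV. \<Sum>a\<in>Act s. \<bar>Q s a s'\<bar>)"

lemma Lc_ge:
  assumes "ctmdp Act Q" "a \<in> Act s"
  shows "\<bar>Q s a s'\<bar> \<le> Lc Act Q"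
proof -
  have fin: "finite (Act x)" for x using assms(1) unfolding ctmdp_def by auto
  have "\<bar>Q s a s'\<bar> \<le> (\<Sum>a\<in>Act s. \<bar>Q s a s'\<bar>)"
    by (rule member_le_sum) (use assms fin in auto)
  also have "\<dots> \<le> (\<Sum>s'\<in>UNIV. \<Sum>a\<in>Act s. \<bar>Q s a s'\<bar>)"
    by (rule member_le_sum[where f="\<lambda>s'. \<Sum>a\<in>Act s. \<bar>Q s a s'\<bar>"]) (auto intro: sum_nonneg)
  also have "\<dots> \<le> Lc Act Q" unfolding Lc_def
    by (rule member_le_sum[where f="\<lambda>s. \<Sum>s'\<in>UNIV. \<Sum>a\<in>Act s. \<bar>Q s a s'\<bar>"]) (auto intro: sum_nonneg)
  finally show ?thesis .
qed

lemma Lc_nonneg: "ctmdp Act Q \<Longrightarrow> 0 \<le> Lc Act Q"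
  unfolding Lc_def by (intro sum_nonneg) auto

lemma Qmul_bound:
  fixes Q :: "'s::finite \<Rightarrow> 'a \<Rightarrow> 's \<Rightarrow> real"
  assumes "ctmdp Act Q" "d \<in> decisions Act"
  shows "\<bar>Qmul Q d v s\<bar> \<le> Lc Act Q * (\<Sum>s'\<in>UNIV. \<bar>v s'\<bar>)"
proof -
  have "\<bar>Qmul Q d v s\<bar> \<le> (\<Sum>s'\<in>UNIV. \<bar>Q s (d s) s'\<bar> * \<bar>v s'\<bar>)"
    unfolding Qmul_def by (rule order_trans[OF sum_abs]) (simp add: abs_mult)
  also have "\<dots> \<le> (\<Sum>s'\<in>UNIV. Lc Act Q * \<bar>v s'\<bar>)"
    using assms Lc_ge[OF assms(1)] unfolding decisions_def
    by (intro sum_mono mult_right_mono) auto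
  finally show ?thesis by (simp add: sum_distrib_left)
qed

lemma uniq:
  fixes Q :: "'s::finite \<Rightarrow> 'a \<Rightarrow> 's \<Rightarrow> real" and W1 W2 :: "real \<Rightarrow> 's \<Rightarrow> real"
    and p :: "real \<Rightarrow> 's \<Rightarrow> 'a"
  assumes ct: "ctmdp Act Q" and T: "0 \<le> T" and p: "\<forall>\<tau>\<in>{0..T}. p \<tau> \<in> decisions Act"
    and h1: "\<forall>t\<in>{0..T}. \<forall>s. ((\<lambda>\<tau>. Qmul Q (p \<tau>) (W1 \<tau>) s) has_integral (W1 t s - c s)) {0..t}"
    and h2: "\<forall>t\<in>{0..T}. \<forall>s. ((\<lambda>\<tau>. Qmul Q (p \<tau>) (W2 \<tau>) s) has_integral (W2 t s - c s)) {0..t}"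
  shows "\<forall>t\<in>{0..T}. W1 t = W2 t"
proof -
  have "\<forall>s\<in>UNIV. \<forall>t\<in>{0..T}. W1 t s - W2 t s = 0"
  proof (rule gronwall_family[where \<phi>="\<lambda>s t. W1 t s - W2 t s"
        and \<psi>="\<lambda>s \<tau>. Qmul Q (p \<tau>) (W1 \<tau>) s - Qmul Q (p \<tau>) (W2 \<tau>) s" and C="Lc Act Q"])
    show "finite (UNIV::'s set)" by simp
    show "0 \<le> T" by fact
    show "0 \<le> Lc Act Q" using Lc_nonneg[OF ct] .
    show "\<forall>s\<in>UNIV. continuous_on {0..T} (\<lambda>t. W1 t s - W2 t s)"
    proof
      fix s
      have "continuous_on {0..T} (\<lambda>t. W1 t s)" using h1 T by (intro cont_int[where c="c s"]) auto
      moreover have "continuous_on {0..T} (\<lambda>t. W2 t s)" using h2 T by (intro cont_int[where c="c s"]) auto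
      ultimately show "continuous_on {0..T} (\<lambda>t. W1 t s - W2 t s)" by (intro continuous_intros)
    qed
    show "\<forall>s\<in>UNIV. \<forall>t\<in>{0..T}. ((\<lambda>\<tau>. Qmul Q (p \<tau>) (W1 \<tau>) s - Qmul Q (p \<tau>) (W2 \<tau>) s) has_integral (W1 t s - W2 t s)) {0..t}"
    proof (intro ballI)
      fix s t assume t: "t \<in> {0..T}"
      from has_integral_diff[OF h1[rule_format, OF t, of s] h2[rule_format, OF t, of s]]
      show "((\<lambda>\<tau>. Qmul Q (p \<tau>) (W1 \<tau>) s - Qmul Q (p \<tau>) (W2 \<tau>) s) has_integral (W1 t s - W2 t s)) {0..t}"
        by simp
    qed
    show "\<forall>s\<in>UNIV. \<forall>\<tau>\<in>{0..T}. \<bar>Qmul Q (p \<tau>) (W1 \<tau>) s - Qmul Q (p \<tau>) (W2 \<tau>) s\<bar> \<le> Lc Act Q * (\<Sum>j\<in>UNIV. \<bar>W1 \<tau> j - W2 \<tau> j\<bar>)"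
    proof (intro ballI)
      fix s \<tau> assume "\<tau> \<in> {0..T}"
      then have "p \<tau> \<in> decisions Act" using p by auto
      from Qmul_bound[OF ct this, of "\<lambda>j. W1 \<tau> j - W2 \<tau> j" s]
      show "\<bar>Qmul Q (p \<tau>) (W1 \<tau>) s - Qmul Q (p \<tau>) (W2 \<tau>) s\<bar> \<le> Lc Act Q * (\<Sum>j\<in>UNIV. \<bar>W1 \<tau> j - W2 \<tau> j\<bar>)"
        by (simp add: Qmul_diff)
    qed
  qed
  then show ?thesis by auto
qed



lemma invariance:
  fixes Q :: "'s::finite \<Rightarrow> 'a \<Rightarrow> 's \<Rightarrow> real" and W :: "real \<Rightarrow> 's \<Rightarrow> real"
  assumes ab: "a \<le> b" and cont: "\<forall>s. continuous_on {a..b} (\<lambda>t. W t s)"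
    and int: "\<forall>t\<in>{a..b}. \<forall>s. ((\<lambda>\<tau>. Qmul Q d1 (W \<tau>) s) has_integral (W t s - W a s)) {a..t}"
    and init: "\<forall>j. Qmul Q d2 ((Qmul Q d1 ^^ j) (W a)) = Qmul Q d1 ((Qmul Q d1 ^^ j) (W a))"
  shows "\<forall>t\<in>{a..b}. \<forall>j. Qmul Q d2 ((Qmul Q d1 ^^ j) (W t)) = Qmul Q d1 ((Qmul Q d1 ^^ j) (W t))"
proof -
  obtain k where "\<forall>j. \<exists>c. \<forall>v s. (Qmul Q d1 ^^ j) v s = (\<Sum>i<k. c i * (Qmul Q d1 ^^ i) v s)"
    using krylov_uniform by blast
  then obtain cc where cc0: "\<forall>j. \<forall>v s. (Qmul Q d1 ^^ j) v s = (\<Sum>i<k. cc j i * (Qmul Q d1 ^^ i) v s)"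
    using choice[of "\<lambda>j c. \<forall>v s. (Qmul Q d1 ^^ j) v s = (\<Sum>i<k. c i * (Qmul Q d1 ^^ i) v s)"] by blast
  have cc: "\<And>j v s. (Qmul Q d1 ^^ j) v s = (\<Sum>i<k. cc j i * (Qmul Q d1 ^^ i) v s)"
    using cc0 by blast
  define h where "h j t s = Qmul Q d2 ((Qmul Q d1 ^^ j) (W t)) s - Qmul Q d1 ((Qmul Q d1 ^^ j) (W t)) s" for j t s
  have hc: "h j t s = (\<Sum>i<k. cc j i * h i t s)" for j t s
  proof -
    have e: "(Qmul Q d1 ^^ j) (W t) = (\<lambda>s. \<Sum>i<k. cc j i * (Qmul Q d1 ^^ i) (W t) s)"
      by (rule ext) (rule cc)
    show ?thesis unfolding h_def e Qmul_lincomb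
      by (simp add: sum_subtractf right_diff_distrib)
  qed
  define I where "I = {..<k} \<times> (UNIV::'s set)"
  define C where "C = 1 + (\<Sum>i<k. \<bar>cc k i\<bar>)"
  have C: "0 \<le> C" unfolding C_def by (simp add: sum_nonneg add_nonneg_nonneg)
  have hcont: "continuous_on {a..b} (\<lambda>t. h j t s)" for j s
  proof -
    have c1: "\<forall>s. continuous_on {a..b} (\<lambda>t. (Qmul Q d1 ^^ j) (W t) s)"
      using cont_Qmul_pow[OF cont] by blast
    have "continuous_on {a..b} (\<lambda>t. Qmul Q d ((Qmul Q d1 ^^ j) (W t)) s)" for d
      using cont_Qmul[OF c1] by blast
    then show ?thesis unfolding h_def by (intro continuous_on_diff)
  qed
  have ha: "h j a s = 0" for j s using init unfolding h_def by simp
  have hint: "((\<lambda>\<tau>. h (Suc j) \<tau> s) has_integral h j t s) {a..t}" if t: "t \<in> {a..b}" for j s t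
  proof -
    have base: "\<forall>s. ((\<lambda>\<tau>. Qmul Q d1 (W \<tau>) s) has_integral (\<lambda>s. W t s - W a s) s) {a..t}"
      using int t by auto
    have p: "((\<lambda>\<tau>. (Qmul Q d1 ^^ j) (Qmul Q d1 (W \<tau>)) s) has_integral (Qmul Q d1 ^^ j) (\<lambda>s. W t s - W a s) s) {a..t}" for s
      by (rule int_Qmul_pow[OF base])
    have p2: "((\<lambda>\<tau>. Qmul Q d (((Qmul Q d1 ^^ j) (Qmul Q d1 (W \<tau>)))) s) has_integral Qmul Q d ((Qmul Q d1 ^^ j) (\<lambda>s. W t s - W a s)) s) {a..t}" for d
      by (rule int_Qmul) (use p in blast)
    have eq1: "(Qmul Q d1 ^^ j) (Qmul Q d1 (W \<tau>)) = (Qmul Q d1 ^^ Suc j) (W \<tau>)" for \<tau>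
      by (simp only: funpow_Suc_right o_apply)
    have "((\<lambda>\<tau>. h (Suc j) \<tau> s) has_integral
       (Qmul Q d2 ((Qmul Q d1 ^^ j) (\<lambda>s. W t s - W a s)) s - Qmul Q d1 ((Qmul Q d1 ^^ j) (\<lambda>s. W t s - W a s)) s)) {a..t}"
      unfolding h_def using has_integral_diff[OF p2[of d2] p2[of d1]] by (simp only: eq1)
    moreover have "Qmul Q d2 ((Qmul Q d1 ^^ j) (\<lambda>s. W t s - W a s)) s - Qmul Q d1 ((Qmul Q d1 ^^ j) (\<lambda>s. W t s - W a s)) s
        = h j t s - h j a s"
      unfolding h_def Qmul_pow_diff Qmul_diff by simp
    ultimately show ?thesis using ha by simp
  qed
  have zero: "\<forall>p\<in>I. \<forall>t\<in>{a..b}. (\<lambda>(j,s) t. h j t s) p t = 0"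
  proof (rule gronwall_family[where \<psi>="\<lambda>(j,s) \<tau>. h (Suc j) \<tau> s" and C=C])
    show "finite I" unfolding I_def by simp
    show "a \<le> b" by fact
    show "0 \<le> C" by fact
    show "\<forall>p\<in>I. continuous_on {a..b} ((\<lambda>(j,s) t. h j t s) p)" using hcont by auto
    show "\<forall>p\<in>I. \<forall>t\<in>{a..b}. ((\<lambda>(j,s) \<tau>. h (Suc j) \<tau> s) p has_integral (\<lambda>(j,s) t. h j t s) p t) {a..t}"
      using hint by auto
    show "\<forall>p\<in>I. \<forall>\<tau>\<in>{a..b}. \<bar>(\<lambda>(j,s) \<tau>. h (Suc j) \<tau> s) p \<tau>\<bar> \<le> C * (\<Sum>q\<in>I. \<bar>(\<lambda>(j,s) t. h j t s) q \<tau>\<bar>)"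
    proof (intro ballI)
      fix p \<tau> assume p: "p \<in> I"
      obtain j s where js: "p = (j,s)" by (cases p)
      let ?U = "\<Sum>q\<in>I. \<bar>(\<lambda>(j,s) t. h j t s) q \<tau>\<bar>"
      have U0: "0 \<le> ?U" by (simp add: sum_nonneg)
      have single: "\<bar>h i \<tau> s'\<bar> \<le> ?U" if "i < k" for i s'
      proof -
        have "(i,s') \<in> I" unfolding I_def using that by simp
        then have "\<bar>(\<lambda>(j,s) t. h j t s) (i,s') \<tau>\<bar> \<le> ?U"
          by (intro member_le_sum) (auto simp: I_def)
        then show ?thesis by simp
      qed
      have "\<bar>h (Suc j) \<tau> s\<bar> \<le> C * ?U"
      proof (cases "Suc j < k")
        case True
        then have "\<bar>h (Suc j) \<tau> s\<bar> \<le> 1 * ?U" using single by simp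
        also have "\<dots> \<le> C * ?U" using U0 unfolding C_def by (intro mult_right_mono) (auto simp: sum_nonneg)
        finally show ?thesis .
      next
        case False
        then have jk: "Suc j = k" using p js unfolding I_def by simp
        have "\<bar>h (Suc j) \<tau> s\<bar> = \<bar>\<Sum>i<k. cc k i * h i \<tau> s\<bar>" using hc jk by metis
        also have "\<dots> \<le> (\<Sum>i<k. \<bar>cc k i\<bar> * \<bar>h i \<tau> s\<bar>)"
          by (rule order_trans[OF sum_abs]) (simp add: abs_mult)
        also have "\<dots> \<le> (\<Sum>i<k. \<bar>cc k i\<bar> * ?U)"
          by (intro sum_mono mult_left_mono single) auto
        also have "\<dots> \<le> C * ?U" unfolding C_def using U0
          by (simp add: sum_distrib_right[symmetric] distrib_right)
        finally show ?thesis .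
      qed
      then show "\<bar>(\<lambda>(j,s) \<tau>. h (Suc j) \<tau> s) p \<tau>\<bar> \<le> C * ?U" using js by simp
    qed
  qed
  have hz: "h j t s = 0" if "t \<in> {a..b}" for j t s
  proof -
    have "h i t s' = 0" if "i < k" for i s'
      using zero \<open>t \<in> {a..b}\<close> that unfolding I_def by auto
    then have "(\<Sum>i<k. cc j i * h i t s) = 0" by (intro sum.neutral) auto
    then show ?thesis using hc[of j t s] by linarith
  qed
  show ?thesis
  proof (intro ballI allI ext)
    fix t j s assume "t \<in> {a..b}"
    then show "Qmul Q d2 ((Qmul Q d1 ^^ j) (W t)) s = Qmul Q d1 ((Qmul Q d1 ^^ j) (W t)) s"
      using hz[of t j s] unfolding h_def by simp
  qed
qed



lemma int_split:
  fixes f :: "real \<Rightarrow> real"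
  assumes "0 \<le> a" "a \<le> t" "(f has_integral X) {0..t}" "(f has_integral Y) {0..a}"
  shows "(f has_integral (X - Y)) {a..t}"
proof -
  have "f integrable_on {a..t}"
  proof (rule integrable_subinterval_real[of f 0 t])
    show "f integrable_on {0..t}" using assms(3) by auto
    show "{a..t} \<subseteq> {0..t}" using assms(1) by auto
  qed
  then have i: "(f has_integral integral {a..t} f) {a..t}" by auto
  have "(f has_integral (Y + integral {a..t} f)) {0..t}"
    by (rule has_integral_combine[OF assms(1,2) assms(4) i])
  then have "X = Y + integral {a..t} f" using has_integral_unique[OF assms(3)] by blast
  then show ?thesis using i by simp
qed

lemma AE_negligible:
  assumes "AE x in lborel. P x"
  obtains N where "negligible N" "\<And>x. x \<notin> N \<Longrightarrow> P x"
proof -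
  from assms obtain N where N: "{x \<in> space lborel. \<not> P x} \<subseteq> N" "emeasure lborel N = 0" "N \<in> sets lborel"
    by (rule AE_E)
  then have "N \<in> null_sets lborel" by (simp add: null_sets_def)
  then have "N \<in> null_sets lebesgue" by (rule null_sets_completionI)
  then have "negligible N" by (simp add: negligible_iff_null_sets)
  moreover have "\<And>x. x \<notin> N \<Longrightarrow> P x" using N(1) by auto
  ultimately show ?thesis using that by blast
qed

lemma comm_iff_pow:
  "(\<forall>j. Qmul Q d2 ((Qmul Q d1 ^^ j) v) = Qmul Q d1 ((Qmul Q d1 ^^ j) v)) \<Longrightarrow>
   (Qmul Q d2 ^^ j) v = (Qmul Q d1 ^^ j) v"
proof (induction j)
  case 0 then show ?case by simp
next
  case (Suc j)
  have "(Qmul Q d2 ^^ Suc j) v = Qmul Q d2 ((Qmul Q d2 ^^ j) v)" by simp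
  also have "\<dots> = Qmul Q d2 ((Qmul Q d1 ^^ j) v)" using Suc.IH Suc.prems by simp
  also have "\<dots> = Qmul Q d1 ((Qmul Q d1 ^^ j) v)" using Suc.prems by blast
  also have "\<dots> = (Qmul Q d1 ^^ Suc j) v" by simp
  finally show ?case .
qed

lemma pow_imp_comm:
  assumes "\<And>j. (Qmul Q d2 ^^ j) v = (Qmul Q d1 ^^ j) v"
  shows "Qmul Q d2 ((Qmul Q d1 ^^ j) v) = Qmul Q d1 ((Qmul Q d1 ^^ j) v)"
proof -
  have "Qmul Q d2 ((Qmul Q d1 ^^ j) v) = (Qmul Q d2 ^^ Suc j) v" using assms[of j] by simp
  also have "\<dots> = Qmul Q d1 ((Qmul Q d1 ^^ j) v)" using assms[of "Suc j"] by simp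
  finally show ?thesis .
qed

locale setting =
  fixes Act :: "'s::finite \<Rightarrow> 'a set" and Q :: "'s \<Rightarrow> 'a \<Rightarrow> 's \<Rightarrow> real"
    and good :: 's and B :: real
    and \<pi> :: "real \<Rightarrow> 's \<Rightarrow> 'a" and W :: "real \<Rightarrow> 's \<Rightarrow> real"
  assumes ct: "ctmdp Act Q" and Bpos: "B > 0"
    and pol: "policy Act B \<pi>" and vf: "value_fn Q good B \<pi> W"
    and opt: "AE t in lborel. t \<in> {0..B} \<longrightarrow> \<pi> (B - t) \<in> Fset Act Q 1 (W t)"
begin

lemma Wcont: "continuous_on {0..B} (\<lambda>t. W t s)"
proof -
  have "\<forall>t\<in>{0..B}. ((\<lambda>\<tau>. Qmul Q (\<pi> (B - \<tau>)) (W \<tau>) s) has_integral (W t s - (if s = good then 1 else 0))) {0..t}"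
    using vf unfolding value_fn_def by blast
  from cont_int[OF _ this] show ?thesis using Bpos by simp
qed

lemma follow:
  assumes "0 \<le> a" "a \<le> b" "b \<le> B" and d1: "\<forall>\<tau>\<in>{a..b}. d1 \<in> Fset Act Q 1 (W \<tau>)"
  shows "\<forall>t\<in>{a..b}. \<forall>s. ((\<lambda>\<tau>. Qmul Q d1 (W \<tau>) s) has_integral (W t s - W a s)) {a..t}"
proof (intro ballI allI)
  fix t s assume t: "t \<in> {a..b}"
  let ?f = "\<lambda>\<tau>. Qmul Q (\<pi> (B - \<tau>)) (W \<tau>) s"
  have "(?f has_integral (W t s - (if s = good then 1 else 0))) {0..t}"
    using vf t assms(1-3) unfolding value_fn_def by auto
  moreover have "(?f has_integral (W a s - (if s = good then 1 else 0))) {0..a}"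
    using vf t assms(1-3) unfolding value_fn_def by auto
  ultimately have I: "(?f has_integral (W t s - W a s)) {a..t}"
    using int_split[of a t ?f] assms(1-3) t by fastforce
  obtain N where N: "negligible N" "\<And>x. x \<notin> N \<Longrightarrow> x \<in> {0..B} \<longrightarrow> \<pi> (B - x) \<in> Fset Act Q 1 (W x)"
    using AE_negligible[OF opt] by blast
  show "((\<lambda>\<tau>. Qmul Q d1 (W \<tau>) s) has_integral (W t s - W a s)) {a..t}"
  proof (rule has_integral_spike[OF N(1) _ I])
    fix x assume x: "x \<in> {a..t} - N"
    have xB: "x \<in> {0..B}" using x t assms(1-3) by auto
    have p1: "\<pi> (B - x) \<in> Fset Act Q 1 (W x)" using N(2)[of x] x xB by blast
    have "x \<in> {a..b}" using x t by auto
    then have p2: "d1 \<in> Fset Act Q 1 (W x)" using d1 by blast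
    show "Qmul Q d1 (W x) s = ?f x" using F1_eq[OF p2 p1] by simp
  qed
qed

lemma transfer:
  assumes "0 \<le> a" "a \<le> b" "b \<le> B"
    and d1: "\<forall>\<tau>\<in>{a..b}. d1 \<in> Fset Act Q 1 (W \<tau>)"
    and d12: "d1 \<in> Fset Act Q CARD('s) (W a)" "d2 \<in> Fset Act Q CARD('s) (W a)"
  shows "\<forall>t\<in>{a..b}. \<forall>j. (Qmul Q d2 ^^ j) (W t) = (Qmul Q d1 ^^ j) (W t)"
proof -
  have "\<forall>t\<in>{a..b}. \<forall>j. Qmul Q d2 ((Qmul Q d1 ^^ j) (W t)) = Qmul Q d1 ((Qmul Q d1 ^^ j) (W t))"
  proof (rule invariance)
    show "a \<le> b" by fact
    show "\<forall>s. continuous_on {a..b} (\<lambda>t. W t s)"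
      using continuous_on_subset[OF Wcont, of "{a..b}"] assms(1-3) by auto
    show "\<forall>t\<in>{a..b}. \<forall>s. ((\<lambda>\<tau>. Qmul Q d1 (W \<tau>) s) has_integral (W t s - W a s)) {a..t}"
      by (rule follow[OF assms(1-4)])
    show "\<forall>j. Qmul Q d2 ((Qmul Q d1 ^^ j) (W a)) = Qmul Q d1 ((Qmul Q d1 ^^ j) (W a))"
    proof
      fix j show "Qmul Q d2 ((Qmul Q d1 ^^ j) (W a)) = Qmul Q d1 ((Qmul Q d1 ^^ j) (W a))"
        by (rule pow_imp_comm) (rule miller[OF d12])
    qed
  qed
  then show ?thesis by (auto intro: comm_iff_pow simp del: funpow.simps)
qed

end



lemma F1_char: "Fset Act Q 1 W = {d \<in> decisions Act. \<forall>d'\<in>decisions Act. \<forall>s. Qmul Q d' W s \<le> Qmul Q d W s}"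
  by simp

lemma F1_transfer:
  assumes "d1 \<in> Fset Act Q 1 W" "d' \<in> decisions Act" "Qmul Q d' W = Qmul Q d1 W"
  shows "d' \<in> Fset Act Q 1 W"
  using assms unfolding F1_char by auto

lemma ereal_lt_Sup:
  assumes "ereal x < ereal y + Sup (ereal ` S)"
  shows "\<exists>\<delta>\<in>S. x < y + \<delta>"
proof -
  have "ereal (x - y) < Sup (ereal ` S)"
    using assms by (cases "Sup (ereal ` S)") auto
  then have "\<exists>z\<in>ereal ` S. ereal (x - y) < z" by (simp only: less_Sup_iff)
  then obtain \<delta> where "\<delta> \<in> S" "x - y < \<delta>" by auto
  then show ?thesis by (intro bexI[of _ \<delta>]) auto
qed

theorem mainTheorem2:
  fixes Act :: "'s::finite \<Rightarrow> 'a set" and Q :: "'s \<Rightarrow> 'a \<Rightarrow> 's \<Rightarrow> real"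
    and good :: 's and B tstar :: real
    and \<pi> :: "real \<Rightarrow> 's \<Rightarrow> 'a" and W :: "real \<Rightarrow> 's \<Rightarrow> real"
  assumes "ctmdp Act Q" and "absorbing Act Q good" and "B > 0"
    and "policy Act B \<pi>" and "value_fn Q good B \<pi> W"
    and "AE t in lborel. t \<in> {0..B} \<longrightarrow> \<pi> (B - t) \<in> Fset Act Q 1 (W t)"
    and "0 < tstar" and "tstar \<le> B"
    and "\<exists>G. (\<forall>\<^sub>F t in at_left tstar. Fset Act Q (CARD('s) - 1 + 2) (W t) = G)
              \<and> Fset Act Q (CARD('s) - 1 + 2) (W tstar) \<noteq> G"
    and "card (Fset Act Q (CARD('s) - 1 + 2) (W tstar)) > 1"
  shows "(\<forall>d1\<in>Fset Act Q (CARD('s) - 1 + 2) (W tstar). \<forall>d2\<in>Fset Act Q (CARD('s) - 1 + 2) (W tstar).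
            Delta Act Q (CARD('s) - 1 + 2) B W tstar d1 = Delta Act Q (CARD('s) - 1 + 2) B W tstar d2)
       \<and> (\<forall>d1\<in>Fset Act Q (CARD('s) - 1 + 2) (W tstar). \<forall>\<delta>1 \<delta>2 d d' \<pi>' W'.
            tstar \<le> \<delta>1 \<and> \<delta>1 < \<delta>2 \<and> ereal \<delta>2 < ereal tstar + Delta Act Q (CARD('s) - 1 + 2) B W tstar d1
            \<and> \<delta>2 \<le> B
            \<and> d \<in> Fset Act Q (CARD('s) - 1 + 1) (W tstar)
            \<and> (\<forall>t\<in>{\<delta>1..<\<delta>2}. \<pi> (B - t) = d)
            \<and> policy Act B \<pi>' \<and> value_fn Q good B \<pi>' W'
            \<and> (\<forall>t\<in>{0..<\<delta>1}. \<pi>' (B - t) = \<pi> (B - t))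
            \<and> d' \<in> Fset Act Q (CARD('s) - 1 + 1) (W tstar) - {d}
            \<and> (\<forall>t\<in>{\<delta>1..<\<delta>2}. \<pi>' (B - t) = d')
            \<longrightarrow> (AE t in lborel. t \<in> {0..<\<delta>2} \<longrightarrow> \<pi>' (B - t) \<in> Fset Act Q 1 (W' t)))"
proof -
  note ct = assms(1)
  interpret S: setting Act Q good B \<pi> W using assms(1,3-6) by unfold_locales
  have K1: "CARD('s) - 1 + 2 = Suc CARD('s)" and K0: "CARD('s) - 1 + 1 = CARD('s)"
    using finite_UNIV_card_ge_0[where 'a='s] by auto
  define N where "N = CARD('s)"
  define SS where "SS d = {\<delta>. \<delta> > 0 \<and> (\<forall>t. tstar \<le> t \<and> t < tstar + \<delta> \<and> t \<le> B \<longrightarrow> d \<in> Fset Act Q (Suc N) (W t))}" for d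
  have Del: "Delta Act Q (Suc N) B W tstar d = Sup (ereal ` SS d)" for d
    unfolding Delta_def SS_def ..
  have tpos: "0 \<le> tstar" using assms(7) by simp
  have subN: "Fset Act Q (Suc N) V \<subseteq> Fset Act Q N V" for V by (rule Fset_mono) simp
  have sub1: "Fset Act Q (Suc N) V \<subseteq> Fset Act Q 1 V" for V by (rule Fset_mono) simp
  have window: "\<forall>\<tau>\<in>{tstar..t}. d1 \<in> Fset Act Q (Suc N) (W \<tau>)"
    if "\<delta> \<in> SS d1" "t < tstar + \<delta>" "t \<le> B" for d1 \<delta> t
    using that unfolding SS_def by auto
  have part1: "SS d1 \<subseteq> SS d2"
    if d12: "d1 \<in> Fset Act Q (Suc N) (W tstar)" "d2 \<in> Fset Act Q (Suc N) (W tstar)" for d1 d2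
  proof
    fix \<delta> assume \<delta>: "\<delta> \<in> SS d1"
    have "d2 \<in> Fset Act Q (Suc N) (W t)" if t: "tstar \<le> t" "t < tstar + \<delta>" "t \<le> B" for t
    proof -
      have w: "\<forall>\<tau>\<in>{tstar..t}. d1 \<in> Fset Act Q (Suc N) (W \<tau>)" by (rule window[OF \<delta> t(2,3)])
      then have w1: "\<forall>\<tau>\<in>{tstar..t}. d1 \<in> Fset Act Q 1 (W \<tau>)" using sub1 by blast
      have "\<forall>t'\<in>{tstar..t}. \<forall>j. (Qmul Q d2 ^^ j) (W t') = (Qmul Q d1 ^^ j) (W t')"
        by (rule S.transfer[OF tpos t(1) t(3) w1]) (use d12 subN N_def in auto)
      then have pe: "\<And>j. (Qmul Q d1 ^^ j) (W t) = (Qmul Q d2 ^^ j) (W t)" using t by auto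
      have "d1 \<in> Fset Act Q (Suc N) (W t)" using w t by auto
      then show ?thesis using Fset_same[OF Fset_dec[OF d12(1)] Fset_dec[OF d12(2)] pe] by blast
    qed
    then show "\<delta> \<in> SS d2" using \<delta> unfolding SS_def by auto
  qed
  have P1: "\<forall>d1\<in>Fset Act Q (Suc N) (W tstar). \<forall>d2\<in>Fset Act Q (Suc N) (W tstar).
            Delta Act Q (Suc N) B W tstar d1 = Delta Act Q (Suc N) B W tstar d2"
  proof (intro ballI)
    fix d1 d2 assume "d1 \<in> Fset Act Q (Suc N) (W tstar)" "d2 \<in> Fset Act Q (Suc N) (W tstar)"
    then have "SS d1 = SS d2" using part1 by blast
    then show "Delta Act Q (Suc N) B W tstar d1 = Delta Act Q (Suc N) B W tstar d2" by (simp add: Del)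
  qed
  have P2: "\<forall>d1\<in>Fset Act Q (Suc N) (W tstar). \<forall>\<delta>1 \<delta>2 d d' \<pi>' W'.
            tstar \<le> \<delta>1 \<and> \<delta>1 < \<delta>2 \<and> ereal \<delta>2 < ereal tstar + Delta Act Q (Suc N) B W tstar d1
            \<and> \<delta>2 \<le> B
            \<and> d \<in> Fset Act Q N (W tstar)
            \<and> (\<forall>t\<in>{\<delta>1..<\<delta>2}. \<pi> (B - t) = d)
            \<and> policy Act B \<pi>' \<and> value_fn Q good B \<pi>' W'
            \<and> (\<forall>t\<in>{0..<\<delta>1}. \<pi>' (B - t) = \<pi> (B - t))
            \<and> d' \<in> Fset Act Q N (W tstar) - {d}
            \<and> (\<forall>t\<in>{\<delta>1..<\<delta>2}. \<pi>' (B - t) = d')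
            \<longrightarrow> (AE t in lborel. t \<in> {0..<\<delta>2} \<longrightarrow> \<pi>' (B - t) \<in> Fset Act Q 1 (W' t))"
  proof (intro ballI allI impI)
    fix d1 \<delta>1 \<delta>2 d d' and \<pi>' :: "real \<Rightarrow> 's \<Rightarrow> 'a" and W' :: "real \<Rightarrow> 's \<Rightarrow> real"
    assume d1: "d1 \<in> Fset Act Q (Suc N) (W tstar)"
    assume H: "tstar \<le> \<delta>1 \<and> \<delta>1 < \<delta>2 \<and> ereal \<delta>2 < ereal tstar + Delta Act Q (Suc N) B W tstar d1
            \<and> \<delta>2 \<le> B
            \<and> d \<in> Fset Act Q N (W tstar)
            \<and> (\<forall>t\<in>{\<delta>1..<\<delta>2}. \<pi> (B - t) = d)
            \<and> policy Act B \<pi>' \<and> value_fn Q good B \<pi>' W'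
            \<and> (\<forall>t\<in>{0..<\<delta>1}. \<pi>' (B - t) = \<pi> (B - t))
            \<and> d' \<in> Fset Act Q N (W tstar) - {d}
            \<and> (\<forall>t\<in>{\<delta>1..<\<delta>2}. \<pi>' (B - t) = d')"
    then have h1: "tstar \<le> \<delta>1" and h2: "\<delta>1 < \<delta>2"
      and h3: "ereal \<delta>2 < ereal tstar + Sup (ereal ` SS d1)" and h4: "\<delta>2 \<le> B"
      and hd: "d \<in> Fset Act Q N (W tstar)" and hpi: "\<forall>t\<in>{\<delta>1..<\<delta>2}. \<pi> (B - t) = d"
      and hpol: "policy Act B \<pi>'" and hvf: "value_fn Q good B \<pi>' W'"
      and hpre: "\<forall>t\<in>{0..<\<delta>1}. \<pi>' (B - t) = \<pi> (B - t)"
      and hd': "d' \<in> Fset Act Q N (W tstar)" and hpi': "\<forall>t\<in>{\<delta>1..<\<delta>2}. \<pi>' (B - t) = d'"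
      by (auto simp: Del)
    obtain \<delta> where \<delta>: "\<delta> \<in> SS d1" "\<delta>2 < tstar + \<delta>" using ereal_lt_Sup[OF h3] by blast
    have w: "\<forall>\<tau>\<in>{tstar..\<delta>2}. d1 \<in> Fset Act Q (Suc N) (W \<tau>)" by (rule window[OF \<delta>(1) \<delta>(2) h4])
    then have w1: "\<forall>\<tau>\<in>{tstar..\<delta>2}. d1 \<in> Fset Act Q 1 (W \<tau>)" using sub1 by blast
    have td2: "tstar \<le> \<delta>2" using h1 h2 by simp
    have d1N: "d1 \<in> Fset Act Q CARD('s) (W tstar)" using d1 subN N_def by auto
    have trd: "\<forall>t'\<in>{tstar..\<delta>2}. \<forall>j. (Qmul Q d ^^ j) (W t') = (Qmul Q d1 ^^ j) (W t')"
      by (rule S.transfer[OF tpos td2 h4 w1 d1N]) (use hd N_def in simp)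
    have trd': "\<forall>t'\<in>{tstar..\<delta>2}. \<forall>j. (Qmul Q d' ^^ j) (W t') = (Qmul Q d1 ^^ j) (W t')"
      by (rule S.transfer[OF tpos td2 h4 w1 d1N]) (use hd' N_def in simp)
    have q: "Qmul Q d' (W \<tau>) = Qmul Q d1 (W \<tau>)" "Qmul Q d (W \<tau>) = Qmul Q d1 (W \<tau>)"
      if "\<tau> \<in> {tstar..\<delta>2}" for \<tau>
      using trd'[rule_format, OF that, of 1] trd[rule_format, OF that, of 1] by simp_all
    define c where "c = (\<lambda>s::'s. if s = good then 1 else (0::real))"
    have Wpi': "\<forall>t\<in>{0..\<delta>2}. \<forall>s. ((\<lambda>\<tau>. Qmul Q (\<pi>' (B - \<tau>)) (W \<tau>) s) has_integral (W t s - c s)) {0..t}"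
    proof (intro ballI allI)
      fix t s assume t: "t \<in> {0..\<delta>2}"
      have I: "((\<lambda>\<tau>. Qmul Q (\<pi> (B - \<tau>)) (W \<tau>) s) has_integral (W t s - c s)) {0..t}"
        using assms(5) t h4 unfolding value_fn_def c_def by auto
      show "((\<lambda>\<tau>. Qmul Q (\<pi>' (B - \<tau>)) (W \<tau>) s) has_integral (W t s - c s)) {0..t}"
      proof (rule has_integral_spike_finite[OF _ _ I])
        show "finite {\<delta>2}" by simp
        fix \<tau> assume \<tau>: "\<tau> \<in> {0..t} - {\<delta>2}"
        then have \<tau>2: "\<tau> < \<delta>2" "0 \<le> \<tau>" using t by auto
        show "Qmul Q (\<pi>' (B - \<tau>)) (W \<tau>) s = Qmul Q (\<pi> (B - \<tau>)) (W \<tau>) s"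
        proof (cases "\<tau> < \<delta>1")
          case True then show ?thesis using hpre \<tau>2 by auto
        next
          case False
          then have "\<tau> \<in> {\<delta>1..<\<delta>2}" "\<tau> \<in> {tstar..\<delta>2}" using \<tau>2 h1 by auto
          then show ?thesis using hpi hpi' q by auto
        qed
      qed
    qed
    have W'pi': "\<forall>t\<in>{0..\<delta>2}. \<forall>s. ((\<lambda>\<tau>. Qmul Q (\<pi>' (B - \<tau>)) (W' \<tau>) s) has_integral (W' t s - c s)) {0..t}"
      using hvf h4 unfolding value_fn_def c_def by auto
    have pdec: "\<forall>\<tau>\<in>{0..\<delta>2}. \<pi>' (B - \<tau>) \<in> decisions Act"
      using hpol h4 unfolding policy_def by auto
    have d2pos: "0 \<le> \<delta>2" using tpos td2 by simp
    have WW: "\<forall>t\<in>{0..\<delta>2}. W t = W' t"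
      by (rule uniq[OF ct d2pos pdec Wpi' W'pi'])
    have d'dec: "d' \<in> decisions Act" using Fset_dec hd' by blast
    show "AE t in lborel. t \<in> {0..<\<delta>2} \<longrightarrow> \<pi>' (B - t) \<in> Fset Act Q 1 (W' t)"
      using assms(6)
    proof (rule eventually_mono)
      fix t assume opt: "t \<in> {0..B} \<longrightarrow> \<pi> (B - t) \<in> Fset Act Q 1 (W t)"
      show "t \<in> {0..<\<delta>2} \<longrightarrow> \<pi>' (B - t) \<in> Fset Act Q 1 (W' t)"
      proof
        assume t: "t \<in> {0..<\<delta>2}"
        then have eq: "W' t = W t" using WW by auto
        show "\<pi>' (B - t) \<in> Fset Act Q 1 (W' t)"
        proof (cases "t < \<delta>1")
          case True then show ?thesis using hpre opt t h4 eq by auto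
        next
          case False
          then have tt: "t \<in> {\<delta>1..<\<delta>2}" "t \<in> {tstar..\<delta>2}" using t h1 by auto
          have "d' \<in> Fset Act Q 1 (W t)"
            by (rule F1_transfer[OF _ d'dec q(1)[OF tt(2)]]) (use w1 tt in blast)
          then show ?thesis using hpi' tt eq by auto
        qed
      qed
    qed
  qed
  show ?thesis unfolding K1 K0 using P1 P2 unfolding N_def by blast
qed


end
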